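(* Let $({\mathbf\Lambda}^\star,{\mathbf V}^\star)$ with ${\mathbf\Lambda}^\star,{\mathbf V}^\star\ge0$ be a minimizer of $F$ over pairs of entrywise nonnegative matrices. Then for every randomized prediction $\pi$ supported on the grid and satisfying $\mathcal U_s(\pi,\ell)\le\epsilon_s$ for all $\ell\in[\![L]\!]$, $s\in[K]$, we have $$\mathcal R(\pi_{{\mathbf\Lambda}^\star,{\mathbf V}^\star})\le\mathcal R(\pi)+\frac{\log(2L+1)}{\beta}.$$
   Context: Let $K\ge 2$, $d\ge1$, and let $(X,S,Y)$ be a random triple with values in $\mathbb R^d\times[K]\times\mathbb R$, $\mathbb E[Y^2]<\infty$. Put $\eta(x)=\mathbb E[Y\mid X=x]$, $p_s=\mathbb P(S=s)>0$, $\tau_s(x)=\mathbb P(S=s\mid X=x)$, $t_s(x)=1-\tau_s(x)/p_s$, $\mathbf t(x)=(t_s(x))_{s\in[K]}$. Fix $B>0$, $L\in\mathbb N$, $\beta>0$, $\boldsymbol\epsilon=(\epsilon_s)\in[0,1]^K$; $[\![L]\!]=\{-L,\dots,L\}$, $r_\ell(x)=(\eta(x)-\ell B/L)^2$. A randomized prediction is a Markov kernel $\pi$ from $\mathbb R^d$ to $\mathbb R$; it is supported on the grid if each $\pi(\cdot\mid x)$ is concentrated on $\{\ell B/L:\ell\in[\![L]\!]\}$, with $\pi(\ell\mid x)$ the mass at $\ell B/L$. $\mathcal R(\pi)=\mathbb E[\int(\hat y-\eta(X))^2\pi(d\hat y\mid X)]$; $\mathcal U_s(\pi,\ell)=|\mathbb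 E[\pi(\ell\mid X)\mid S=s]-\mathbb E[\pi(\ell\mid X)]|$. $\mathrm{LSE}_\beta(\mathbf w)=\beta^{-1}\log\sum_j e^{\beta w_j}$, $\sigma_j(\mathbf w)=e^{w_j}/\sum_ie^{w_i}$. For ${\mathbf\Lambda}=(\lambda_{\ell s}),{\mathbf V}=(\nu_{\ell s})$ with rows $\boldsymbol\lambda_\ell,\boldsymbol\nu_\ell\in\mathbb R^K$: $F({\mathbf\Lambda},{\mathbf V})=\mathbb E\big[\mathrm{LSE}_\beta\big((\langle\boldsymbol\lambda_\ell-\boldsymbol\nu_\ell,\mathbf t(X)\rangle-r_\ell(X))_{\ell\in[\![L]\!]}\big)\big]+\sum_{\ell}\langle\boldsymbol\lambda_\ell+\boldsymbol\nu_\ell,\boldsymbol\epsilon\rangle$, and $\pi_{{\mathbf\Lambda},{\mathbf V}}(\ell\mid x)=\sigma_\ell\big(\beta(\langle\boldsymbol\lambda_{\ell'}-\boldsymbol\nu_{\ell'},\mathbf t(x)\rangle-r_{\ell'}(x))_{\ell'\in[\![L]\!]}\big)$. *)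

theory Defs
  imports "HOL-Probability.Probability"
begin

definition grid :: "real \<Rightarrow> nat \<Rightarrow> int \<Rightarrow> real" where
  "grid B L l = real_of_int l * B / real L"

definition LSE :: "real \<Rightarrow> 'i set \<Rightarrow> ('i \<Rightarrow> real) \<Rightarrow> real" where
  "LSE \<beta> I w = ln (\<Sum>j\<in>I. exp (\<beta> * w j)) / \<beta>"

definition softmax :: "'i set \<Rightarrow> ('i \<Rightarrow> real) \<Rightarrow> 'i \<Rightarrow> real" where
  "softmax I w j = exp (w j) / (\<Sum>i\<in>I. exp (w i))"

definition pS :: "'a measure \<Rightarrow> ('a \<Rightarrow> nat) \<Rightarrow> nat \<Rightarrow> real" where
  "pS M S s = measure M {\<omega> \<in> space M. S \<omega> = s}"

definition tfun :: "'a measure \<Rightarrow> ('a \<Rightarrow> nat) \<Rightarrow> (nat \<Rightarrow> 'x \<Rightarrow> real) \<Rightarrow> nat \<Rightarrow> 'x \<Rightarrow> real" where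
  "tfun M S \<tau> s x = 1 - \<tau> s x / pS M S s"

definition rfun :: "real \<Rightarrow> nat \<Rightarrow> ('x \<Rightarrow> real) \<Rightarrow> int \<Rightarrow> 'x \<Rightarrow> real" where
  "rfun B L \<eta> l x = (\<eta> x - grid B L l)\<^sup>2"

definition score :: "'a measure \<Rightarrow> ('a \<Rightarrow> nat) \<Rightarrow> nat \<Rightarrow> real \<Rightarrow> nat \<Rightarrow> ('x \<Rightarrow> real)
    \<Rightarrow> (nat \<Rightarrow> 'x \<Rightarrow> real) \<Rightarrow> (int \<Rightarrow> nat \<Rightarrow> real) \<Rightarrow> (int \<Rightarrow> nat \<Rightarrow> real) \<Rightarrow> int \<Rightarrow> 'x \<Rightarrow> real" where
  "score M S K B L \<eta> \<tau> \<Lambda> V l x =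
     (\<Sum>s\<in>{1..K}. (\<Lambda> l s - V l s) * tfun M S \<tau> s x) - rfun B L \<eta> l x"

definition Fobj :: "'a measure \<Rightarrow> ('a \<Rightarrow> 'x) \<Rightarrow> ('a \<Rightarrow> nat) \<Rightarrow> nat \<Rightarrow> real \<Rightarrow> nat \<Rightarrow> real
    \<Rightarrow> (nat \<Rightarrow> real) \<Rightarrow> ('x \<Rightarrow> real) \<Rightarrow> (nat \<Rightarrow> 'x \<Rightarrow> real)
    \<Rightarrow> (int \<Rightarrow> nat \<Rightarrow> real) \<Rightarrow> (int \<Rightarrow> nat \<Rightarrow> real) \<Rightarrow> real" where
  "Fobj M X S K B L \<beta> \<epsilon> \<eta> \<tau> \<Lambda> V =
     (\<integral>\<omega>. LSE \<beta> {-int L..int L} (\<lambda>l. score M S K B L \<eta> \<tau> \<Lambda> V l (X \<omega>)) \<partial>M)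
     + (\<Sum>l\<in>{-int L..int L}. \<Sum>s\<in>{1..K}. (\<Lambda> l s + V l s) * \<epsilon> s)"

definition pi_dual :: "'a measure \<Rightarrow> ('a \<Rightarrow> nat) \<Rightarrow> nat \<Rightarrow> real \<Rightarrow> nat \<Rightarrow> real
    \<Rightarrow> ('x \<Rightarrow> real) \<Rightarrow> (nat \<Rightarrow> 'x \<Rightarrow> real)
    \<Rightarrow> (int \<Rightarrow> nat \<Rightarrow> real) \<Rightarrow> (int \<Rightarrow> nat \<Rightarrow> real) \<Rightarrow> 'x \<Rightarrow> int \<Rightarrow> real" where
  "pi_dual M S K B L \<beta> \<eta> \<tau> \<Lambda> V x l =
     softmax {-int L..int L} (\<lambda>l'. \<beta> * score M S K B L \<eta> \<tau> \<Lambda> V l' x) l"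

text \<open>A randomized prediction supported on the grid, given by its masses pi(l|x):
  a Markov kernel concentrated on {l B / L : l in {-L..L}}.\<close>
definition grid_prediction :: "nat \<Rightarrow> ('x::topological_space \<Rightarrow> int \<Rightarrow> real) \<Rightarrow> bool" where
  "grid_prediction L \<pi> \<longleftrightarrow>
     (\<forall>l. (\<lambda>x. \<pi> x l) \<in> borel_measurable borel) \<and>
     (\<forall>x l. 0 \<le> \<pi> x l) \<and>
     (\<forall>x l. l \<notin> {-int L..int L} \<longrightarrow> \<pi> x l = 0) \<and>
     (\<forall>x. (\<Sum>l\<in>{-int L..int L}. \<pi> x l) = 1)"

definition risk :: "'a measure \<Rightarrow> ('a \<Rightarrow> 'x) \<Rightarrow> real \<Rightarrow> nat \<Rightarrow> ('x \<Rightarrow> real) \<Rightarrow> ('x \<Rightarrow> int \<Rightarrow> real) \<Rightarrow> real" where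
  "risk M X B L \<eta> \<pi> =
     (\<integral>\<omega>. (\<Sum>l\<in>{-int L..int L}. \<pi> (X \<omega>) l * (grid B L l - \<eta> (X \<omega>))\<^sup>2) \<partial>M)"

definition unfair :: "'a measure \<Rightarrow> ('a \<Rightarrow> 'x) \<Rightarrow> ('a \<Rightarrow> nat) \<Rightarrow> ('x \<Rightarrow> int \<Rightarrow> real) \<Rightarrow> nat \<Rightarrow> int \<Rightarrow> real" where
  "unfair M X S \<pi> s l =
     \<bar>(\<integral>\<omega>. \<pi> (X \<omega>) l * indicator {\<omega>\<in>space M. S \<omega> = s} \<omega> \<partial>M) / pS M S s
      - (\<integral>\<omega>. \<pi> (X \<omega>) l \<partial>M)\<bar>"

end

theory Submission
  imports Defs
begin

lemma exp_le_quad: fixes x::real assumes "\<bar>x\<bar> \<le> 1" shows "exp x \<le> 1 + x + x\<^sup>2"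
proof (cases "x \<ge> 0")
  case True thus ?thesis using exp_bound assms by auto
next
  case False
  define y where "y = -x"
  have y: "0 \<le> y" "y \<le> 1" using False assms by (auto simp: y_def)
  have "1 + y \<le> exp y" by (rule exp_ge_add_one_self)
  hence "(1+y)*(1 - y + y\<^sup>2) \<le> exp y * (1 - y + y\<^sup>2)"
    by (rule mult_right_mono) (use y zero_le_power2[of y] in linarith)
  moreover have "(1+y)*(1 - y + y\<^sup>2) = 1 + y^3" by (simp add: algebra_simps power2_eq_square power3_eq_cube)
  moreover have "0 \<le> y^3" using y by simp
  ultimately have "1 \<le> exp y * (1 - y + y\<^sup>2)" by linarith
  hence "exp (-y) \<le> exp (-y) * (exp y * (1 - y + y\<^sup>2))" by simp
  also have "\<dots> = 1 - y + y\<^sup>2" by (simp add: exp_minus field_simps)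
  finally show ?thesis by (simp add: y_def)
qed

lemma abs_le_one_sq: fixes y :: real shows "\<bar>y\<bar> \<le> 1 + y\<^sup>2"
proof -
  have "0 \<le> (\<bar>y\<bar> - 1)\<^sup>2" by simp
  hence "0 \<le> \<bar>y\<bar>\<^sup>2 - 2 * \<bar>y\<bar> + 1" by (simp add: power2_eq_square algebra_simps)
  thus ?thesis by (simp add: power2_abs)
qed

lemma abs_scale_le: fixes a b C :: real assumes "0 \<le> a" "a \<le> 1" "\<bar>b\<bar> \<le> C" shows "\<bar>a * b\<bar> \<le> C"
proof -
  have "\<bar>a * b\<bar> = a * \<bar>b\<bar>" using assms by (simp add: abs_mult)
  also have "\<dots> \<le> 1 * \<bar>b\<bar>" using assms by (intro mult_right_mono) auto
  finally show ?thesis using assms by simp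
qed

lemma small_le:
  fixes D k d0 :: real
  assumes "0 < d0" "0 \<le> k" "\<And>\<delta>. 0 < \<delta> \<Longrightarrow> \<delta> \<le> d0 \<Longrightarrow> D \<le> k * \<delta>"
  shows "D \<le> 0"
proof (rule ccontr)
  assume "\<not> D \<le> 0" hence D: "0 < D" by simp
  define \<delta> where "\<delta> = min d0 (D / (2 * (k + 1)))"
  have d: "0 < \<delta>" "\<delta> \<le> d0" "\<delta> \<le> D / (2 * (k + 1))" using assms D by (auto simp: \<delta>_def)
  have "D \<le> k * \<delta>" using assms(3)[OF d(1,2)] .
  also have "\<dots> \<le> k * (D / (2 * (k + 1)))" using d assms by (intro mult_left_mono) auto
  also have "\<dots> < D" using D assms(2) by (simp add: field_simps) (smt (verit) mult_nonneg_nonneg)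
  finally show False by simp
qed

lemma LSE_ge_member:
  assumes "finite I" "j \<in> I" "\<beta> > 0"
  shows "w j \<le> LSE \<beta> I w"
proof -
  have "exp (\<beta> * w j) \<le> (\<Sum>i\<in>I. exp (\<beta> * w i))"
    using assms by (intro member_le_sum) auto
  hence "ln (exp (\<beta> * w j)) \<le> ln (\<Sum>i\<in>I. exp (\<beta> * w i))"
    using assms by (subst ln_le_cancel_iff) (auto intro: sum_pos)
  hence "\<beta> * w j \<le> ln (\<Sum>i\<in>I. exp (\<beta> * w i))" by simp
  thus ?thesis using assms unfolding LSE_def by (simp add: field_simps)
qed

lemma LSE_ge_avg:
  assumes "finite I" "I \<noteq> {}" "\<beta> > 0" "\<And>j. j \<in> I \<Longrightarrow> q j \<ge> 0" "(\<Sum>j\<in>I. q j) = 1"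
  shows "(\<Sum>j\<in>I. q j * w j) \<le> LSE \<beta> I w"
proof -
  have "(\<Sum>j\<in>I. q j * w j) \<le> (\<Sum>j\<in>I. q j * LSE \<beta> I w)"
    using assms LSE_ge_member[OF assms(1) _ assms(3)] by (intro sum_mono mult_left_mono) auto
  also have "\<dots> = LSE \<beta> I w" using assms by (simp add: sum_distrib_right[symmetric])
  finally show ?thesis .
qed

lemma LSE_le_const:
  assumes "finite I" "I \<noteq> {}" "\<beta> > 0" "\<And>j. j \<in> I \<Longrightarrow> w j \<le> c"
  shows "LSE \<beta> I w \<le> c + ln (card I) / \<beta>"
proof -
  have "(\<Sum>i\<in>I. exp (\<beta> * w i)) \<le> (\<Sum>i\<in>I. exp (\<beta> * c))"
    using assms by (intro sum_mono) auto
  also have "\<dots> = card I * exp (\<beta> * c)" by simp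
  finally have le: "(\<Sum>i\<in>I. exp (\<beta> * w i)) \<le> card I * exp (\<beta> * c)" .
  have pos: "0 < (\<Sum>i\<in>I. exp (\<beta> * w i))" using assms by (intro sum_pos) auto
  have "ln (\<Sum>i\<in>I. exp (\<beta> * w i)) \<le> ln (card I * exp (\<beta> * c))"
    using le pos by (subst ln_le_cancel_iff) auto
  also have "\<dots> = ln (card I) + \<beta> * c" using assms by (simp add: ln_mult card_gt_0_iff)
  finally show ?thesis using assms unfolding LSE_def by (simp add: field_simps)
qed

lemma softmax_nonneg: "finite I \<Longrightarrow> 0 \<le> softmax I w j"
  unfolding softmax_def by (auto intro!: divide_nonneg_nonneg sum_nonneg)

lemma softmax_sum: "finite I \<Longrightarrow> I \<noteq> {} \<Longrightarrow> (\<Sum>j\<in>I. softmax I w j) = 1"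
proof -
  assume a: "finite I" "I \<noteq> {}"
  have "0 < (\<Sum>i\<in>I. exp (w i))" using a by (intro sum_pos) auto
  thus ?thesis unfolding softmax_def by (simp add: sum_divide_distrib[symmetric])
qed

lemma LSE_le_avg:
  assumes "finite I" "I \<noteq> {}" "\<beta> > 0"
  shows "LSE \<beta> I w \<le> (\<Sum>j\<in>I. softmax I (\<lambda>l. \<beta> * w l) j * w j) + ln (card I) / \<beta>"
proof -
  define Z where "Z = (\<Sum>i\<in>I. exp (\<beta> * w i))"
  define \<sigma> where "\<sigma> j = exp (\<beta> * w j) / Z" for j
  have Z: "0 < Z" unfolding Z_def using assms by (intro sum_pos) auto
  have \<sigma>pos: "0 < \<sigma> j" for j using Z by (simp add: \<sigma>_def)
  have sm: "softmax I (\<lambda>l. \<beta> * w l) j = \<sigma> j" for j unfolding softmax_def \<sigma>_def Z_def by simp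
  have s1: "(\<Sum>j\<in>I. \<sigma> j) = 1" using softmax_sum[OF assms(1,2), of "\<lambda>l. \<beta> * w l"] sm by simp
  have n: "0 < real (card I)" using assms by (simp add: card_gt_0_iff)
  have lnsig: "ln (\<sigma> j) = \<beta> * w j - ln Z" for j using Z by (simp add: \<sigma>_def ln_div)
  have key: "(\<Sum>j\<in>I. \<sigma> j * ln (1 / (card I * \<sigma> j))) \<le> (\<Sum>j\<in>I. \<sigma> j * (1 / (card I * \<sigma> j) - 1))"
    using \<sigma>pos n by (intro sum_mono mult_left_mono ln_le_minus_one) (auto intro: less_imp_le simp: field_simps)
  also have "\<dots> = (\<Sum>j\<in>I. 1 / card I - \<sigma> j)"
  proof (intro sum.cong refl)
    fix j have "\<sigma> j \<noteq> 0" using \<sigma>pos[of j] by simp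
    thus "\<sigma> j * (1 / (card I * \<sigma> j) - 1) = 1 / card I - \<sigma> j" using n by (simp add: field_simps)
  qed
  also have "\<dots> = 0" using s1 n by (simp add: sum_subtractf)
  finally have k0: "(\<Sum>j\<in>I. \<sigma> j * ln (1 / (card I * \<sigma> j))) \<le> 0" .
  have "(\<Sum>j\<in>I. \<sigma> j * ln (1 / (card I * \<sigma> j))) = (\<Sum>j\<in>I. \<sigma> j * (ln Z - \<beta> * w j - ln (card I)))"
    using \<sigma>pos n by (intro sum.cong refl) (auto simp: ln_div ln_mult lnsig)
  also have "\<dots> = (\<Sum>j\<in>I. \<sigma> j) * ln Z - \<beta> * (\<Sum>j\<in>I. \<sigma> j * w j) - (\<Sum>j\<in>I. \<sigma> j) * ln (card I)"
    by (simp add: right_diff_distrib sum_subtractf sum_distrib_left sum_distrib_right mult_ac)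
  also have "\<dots> = ln Z - \<beta> * (\<Sum>j\<in>I. \<sigma> j * w j) - ln (card I)" using s1 by simp
  finally have "ln Z \<le> \<beta> * (\<Sum>j\<in>I. \<sigma> j * w j) + ln (card I)" using k0 by linarith
  hence "ln Z / \<beta> \<le> (\<Sum>j\<in>I. \<sigma> j * w j) + ln (card I) / \<beta>"
    using assms by (simp add: field_simps)
  thus ?thesis unfolding LSE_def Z_def[symmetric] sm .
qed

lemma LSE_shift:
  assumes "finite I" "I \<noteq> {}" "\<beta> > 0" "0 \<le> \<delta>" "\<And>l. l \<in> I \<Longrightarrow> \<bar>b l\<bar> \<le> C" "\<beta> * \<delta> * C \<le> 1"
  shows "LSE \<beta> I (\<lambda>l. w l - \<delta> * b l) \<le> LSE \<beta> I w
           - \<delta> * (\<Sum>j\<in>I. softmax I (\<lambda>l. \<beta> * w l) j * b j) + \<beta> * \<delta>\<^sup>2 * C\<^sup>2"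
proof -
  define Z where "Z = (\<Sum>i\<in>I. exp (\<beta> * w i))"
  define \<sigma> where "\<sigma> j = exp (\<beta> * w j) / Z" for j
  have Z: "0 < Z" unfolding Z_def using assms by (intro sum_pos) auto
  have \<sigma>pos: "0 < \<sigma> j" for j using Z by (simp add: \<sigma>_def)
  have sm: "softmax I (\<lambda>l. \<beta> * w l) j = \<sigma> j" for j unfolding softmax_def \<sigma>_def Z_def by simp
  have s1: "(\<Sum>j\<in>I. \<sigma> j) = 1" using softmax_sum[OF assms(1,2), of "\<lambda>l. \<beta> * w l"] sm by simp
  define Q where "Q = (\<Sum>j\<in>I. \<sigma> j * exp (- \<beta> * \<delta> * b j))"
  have Q: "0 < Q" unfolding Q_def using assms \<sigma>pos by (intro sum_pos) auto
  have "(\<Sum>i\<in>I. exp (\<beta> * (w i - \<delta> * b i))) = (\<Sum>i\<in>I. Z * (\<sigma> i * exp (- \<beta> * \<delta> * b i)))"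
    using Z by (intro sum.cong refl) (simp add: \<sigma>_def algebra_simps flip: exp_add)
  also have "\<dots> = Z * Q" by (simp add: Q_def sum_distrib_left)
  finally have Z': "(\<Sum>i\<in>I. exp (\<beta> * (w i - \<delta> * b i))) = Z * Q" .
  have C0: "0 \<le> C" using assms(5) assms(2) by (meson abs_ge_zero all_not_in_conv order_trans)
  have xb: "\<bar>- \<beta> * \<delta> * b j\<bar> \<le> \<beta> * \<delta> * C" if "j \<in> I" for j
  proof -
    have "\<bar>- \<beta> * \<delta> * b j\<bar> = (\<beta> * \<delta>) * \<bar>b j\<bar>" using assms by (simp add: abs_mult)
    also have "\<dots> \<le> (\<beta> * \<delta>) * C" using assms that by (intro mult_left_mono) auto
    finally show ?thesis .
  qed
  have "ln Q \<le> Q - 1" using Q by (rule ln_le_minus_one)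
  also have "\<dots> = (\<Sum>j\<in>I. \<sigma> j * (exp (- \<beta> * \<delta> * b j) - 1))"
    using s1 by (simp add: Q_def right_diff_distrib sum_subtractf)
  also have "\<dots> \<le> (\<Sum>j\<in>I. \<sigma> j * (- \<beta> * \<delta> * b j + (\<beta> * \<delta> * C)\<^sup>2))"
  proof (intro sum_mono mult_left_mono)
    fix j assume j: "j \<in> I"
    have a: "\<bar>- \<beta> * \<delta> * b j\<bar> \<le> 1" using xb[OF j] assms by linarith
    have "(- \<beta> * \<delta> * b j)\<^sup>2 \<le> (\<beta> * \<delta> * C)\<^sup>2"
      using xb[OF j] by (metis abs_ge_zero power2_abs power_mono)
    thus "exp (- \<beta> * \<delta> * b j) - 1 \<le> - \<beta> * \<delta> * b j + (\<beta> * \<delta> * C)\<^sup>2"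
      using exp_le_quad[OF a] by linarith
  qed (use \<sigma>pos less_imp_le in auto)
  also have "\<dots> = - \<beta> * \<delta> * (\<Sum>j\<in>I. \<sigma> j * b j) + (\<Sum>j\<in>I. \<sigma> j) * (\<beta> * \<delta> * C)\<^sup>2"
  proof -
    have "(\<Sum>j\<in>I. \<sigma> j * (- \<beta> * \<delta> * b j + (\<beta> * \<delta> * C)\<^sup>2))
        = (\<Sum>j\<in>I. (- \<beta> * \<delta>) * (\<sigma> j * b j) + \<sigma> j * (\<beta> * \<delta> * C)\<^sup>2)"
      by (intro sum.cong refl) (simp add: algebra_simps)
    also have "\<dots> = - \<beta> * \<delta> * (\<Sum>j\<in>I. \<sigma> j * b j) + (\<Sum>j\<in>I. \<sigma> j) * (\<beta> * \<delta> * C)\<^sup>2"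
      by (simp only: sum.distrib sum_distrib_left[symmetric] sum_distrib_right[symmetric])
    finally show ?thesis .
  qed
  finally have lnQ: "ln Q \<le> - \<beta> * \<delta> * (\<Sum>j\<in>I. \<sigma> j * b j) + (\<beta> * \<delta> * C)\<^sup>2" using s1 by simp
  have "LSE \<beta> I (\<lambda>l. w l - \<delta> * b l) = (ln Z + ln Q) / \<beta>"
    unfolding LSE_def Z' using Z Q by (simp add: ln_mult)
  also have "\<dots> = LSE \<beta> I w + ln Q / \<beta>" unfolding LSE_def Z_def by (simp add: add_divide_distrib)
  also have "ln Q / \<beta> \<le> (- \<beta> * \<delta> * (\<Sum>j\<in>I. \<sigma> j * b j) + (\<beta> * \<delta> * C)\<^sup>2) / \<beta>"
    using lnQ assms(3) by (intro divide_right_mono) auto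
  also have "(- \<beta> * \<delta> * (\<Sum>j\<in>I. \<sigma> j * b j) + (\<beta> * \<delta> * C)\<^sup>2) / \<beta>
     = - \<delta> * (\<Sum>j\<in>I. \<sigma> j * b j) + \<beta> * \<delta>\<^sup>2 * C\<^sup>2"
    using assms(3) by (simp add: field_simps power2_eq_square)
  finally show ?thesis unfolding sm by simp
qed

theorem lemma3p3:
  fixes M :: "'a measure"
    and X :: "'a \<Rightarrow> real ^ 'd"
    and S :: "'a \<Rightarrow> nat"
    and Y :: "'a \<Rightarrow> real"
    and K L :: nat
    and B \<beta> :: real
    and \<epsilon> :: "nat \<Rightarrow> real"
    and \<eta> :: "real ^ 'd \<Rightarrow> real"
    and \<tau> :: "nat \<Rightarrow> real ^ 'd \<Rightarrow> real"
    and \<Lambda>s Vs :: "int \<Rightarrow> nat \<Rightarrow> real"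
    and \<pi> :: "real ^ 'd \<Rightarrow> int \<Rightarrow> real"
  assumes P: "prob_space M"
    and K: "K \<ge> 2"
    and Xm: "X \<in> borel_measurable M"
    and Sm: "S \<in> measurable M (count_space UNIV)"
    and Srange: "\<forall>\<omega>\<in>space M. S \<omega> \<in> {1..K}"
    and Ym: "Y \<in> borel_measurable M"
    and Y2: "integrable M (\<lambda>\<omega>. (Y \<omega>)\<^sup>2)"
    and ps: "\<forall>s\<in>{1..K}. pS M S s > 0"
    and eta_m: "\<eta> \<in> borel_measurable borel"
    and eta: "AE \<omega> in M. \<eta> (X \<omega>) = real_cond_exp M (vimage_algebra (space M) X borel) Y \<omega>"
    and tau_m: "\<forall>s. \<tau> s \<in> borel_measurable borel"
    and tau: "\<forall>s\<in>{1..K}. AE \<omega> in M. \<tau> s (X \<omega>) =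
                 real_cond_exp M (vimage_algebra (space M) X borel)
                   (indicator {\<omega>\<in>space M. S \<omega> = s}) \<omega>"
    and B: "B > 0"
    and L: "L \<ge> 1"
    and beta: "\<beta> > 0"
    and eps: "\<forall>s\<in>{1..K}. 0 \<le> \<epsilon> s \<and> \<epsilon> s \<le> 1"
    and nonneg_star: "\<forall>l\<in>{-int L..int L}. \<forall>s\<in>{1..K}. 0 \<le> \<Lambda>s l s \<and> 0 \<le> Vs l s"
    and minimizer: "\<forall>\<Lambda> V. (\<forall>l\<in>{-int L..int L}. \<forall>s\<in>{1..K}. 0 \<le> \<Lambda> l s \<and> 0 \<le> V l s) \<longrightarrow>
                      Fobj M X S K B L \<beta> \<epsilon> \<eta> \<tau> \<Lambda>s Vs \<le> Fobj M X S K B L \<beta> \<epsilon> \<eta> \<tau> \<Lambda> V"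
    and pi_grid: "grid_prediction L \<pi>"
    and pi_fair: "\<forall>l\<in>{-int L..int L}. \<forall>s\<in>{1..K}. unfair M X S \<pi> s l \<le> \<epsilon> s"
  shows "risk M X B L \<eta> (pi_dual M S K B L \<beta> \<eta> \<tau> \<Lambda>s Vs)
           \<le> risk M X B L \<eta> \<pi> + ln (2 * real L + 1) / \<beta>"
proof -
  interpret prob_space M by (rule P)
  define G where "G = vimage_algebra (space M) X borel"
  have subG: "subalgebra M G" unfolding subalgebra_def G_def
    using sets_image_in_sets[of M "space M" X borel] Xm by auto
  interpret F: finite_measure_subalgebra M G by unfold_locales (rule subG)
  have XG: "X \<in> measurable G borel" unfolding G_def by (rule measurable_vimage_algebra1) auto
  note [measurable] = Xm eta_m
  have tau_m'[measurable]: "\<And>s. \<tau> s \<in> borel_measurable borel" using tau_m by auto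
  have pi_m[measurable]: "\<And>l. (\<lambda>x. \<pi> x l) \<in> borel_measurable borel"
    using pi_grid unfolding grid_prediction_def by auto
  have pi_nn: "\<And>x l. 0 \<le> \<pi> x l" and pi_sum: "\<And>x. (\<Sum>l\<in>{-int L..int L}. \<pi> x l) = 1"
    using pi_grid unfolding grid_prediction_def by auto
  define I where "I = {-int L..int L}"
  have fI: "finite I" and neI: "I \<noteq> {}" and zI: "0 \<in> I" unfolding I_def by auto
  have cardI: "real (card I) = 2 * real L + 1" unfolding I_def by simp
  have Ssets: "{\<omega>\<in>space M. S \<omega> = s} \<in> sets M" for s
  proof -
    have "{\<omega>\<in>space M. S \<omega> = s} = S -` {s} \<inter> space M" by auto
    thus ?thesis using measurable_sets[OF Sm, of "{s}"] by simp
  qed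
  have ind_int: "integrable M (indicator {\<omega>\<in>space M. S \<omega> = s} :: _ \<Rightarrow> real)" for s
    using Ssets[of s] by (intro integrable_real_indicator) (auto simp: emeasure_finite less_top[symmetric])
  have tau01: "AE \<omega> in M. \<forall>s\<in>{1..K}. 0 \<le> \<tau> s (X \<omega>) \<and> \<tau> s (X \<omega>) \<le> 1"
  proof (rule eventually_ball_finite, simp, intro ballI)
    fix s assume s: "s \<in> {1..K}"
    have "AE \<omega> in M. 0 \<le> real_cond_exp M G (indicator {\<omega>\<in>space M. S \<omega> = s}) \<omega>"
      by (rule F.real_cond_exp_ge_c[OF ind_int]) auto
    moreover have "AE \<omega> in M. real_cond_exp M G (indicator {\<omega>\<in>space M. S \<omega> = s}) \<omega> \<le> 1"
      by (rule F.real_cond_exp_le_c[OF ind_int]) (auto simp: indicator_def)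
    moreover note tau[rule_format, OF s, folded G_def]
    ultimately show "AE \<omega> in M. 0 \<le> \<tau> s (X \<omega>) \<and> \<tau> s (X \<omega>) \<le> 1" by eventually_elim auto
  qed
  have Yint: "integrable M Y"
    by (rule Bochner_Integration.integrable_bound[of _ "\<lambda>\<omega>. 1 + (Y \<omega>)\<^sup>2"])
       (use Y2 Ym in \<open>auto intro!: AE_I2 abs_le_one_sq[THEN order_trans]\<close>)
  have eta2: "integrable M (\<lambda>\<omega>. (\<eta> (X \<omega>))\<^sup>2)"
  proof -
    have "integrable M (\<lambda>\<omega>. (real_cond_exp M G Y \<omega>)\<^sup>2)"
      by (rule F.integrable_convex_cond_exp[where I=UNIV and a=0 and b=0 and q="\<lambda>x. x\<^sup>2"])
         (use Yint Y2 convex_power2 in auto)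
    moreover have "AE \<omega> in M. (real_cond_exp M G Y \<omega>)\<^sup>2 = (\<eta> (X \<omega>))\<^sup>2"
      using eta unfolding G_def by eventually_elim simp
    ultimately show ?thesis
      by (subst integrable_cong_AE[where g="\<lambda>\<omega>. (real_cond_exp M G Y \<omega>)\<^sup>2"]) auto
  qed
  define bb where "bb l x = (\<Sum>s\<in>{1..K}. (\<Lambda>s l s - Vs l s) * tfun M S \<tau> s x)" for l x
  define rr where "rr l x = rfun B L \<eta> l x" for l x
  define C where "C = (\<Sum>l\<in>I. \<Sum>s\<in>{1..K}. \<bar>\<Lambda>s l s - Vs l s\<bar> * (1 + 1 / pS M S s))"
  have pinv: "0 \<le> 1 + 1 / pS M S s" if "s \<in> {1..K}" for s
    using ps that by (smt (verit) divide_nonneg_pos zero_le_one)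
  have C0: "0 \<le> C" unfolding C_def using pinv by (intro sum_nonneg mult_nonneg_nonneg) auto
  have bb_m[measurable]: "\<And>l. bb l \<in> borel_measurable borel"
    unfolding bb_def tfun_def by measurable
  have rr_m[measurable]: "\<And>l. rr l \<in> borel_measurable borel"
    unfolding rr_def rfun_def by measurable
  have rr_nn: "0 \<le> rr l x" for l x unfolding rr_def rfun_def by simp
  have rr0: "rr 0 x = (\<eta> x)\<^sup>2" for x unfolding rr_def rfun_def grid_def by simp
  have rr_le: "rr l x \<le> 2 * (grid B L l)\<^sup>2 + 2 * (\<eta> x)\<^sup>2" for l x
    unfolding rr_def rfun_def using zero_le_power2[of "\<eta> x + grid B L l"]
    by (simp add: power2_eq_square algebra_simps)
  have tb: "AE \<omega> in M. \<forall>s\<in>{1..K}. \<bar>tfun M S \<tau> s (X \<omega>)\<bar> \<le> 1 + 1 / pS M S s"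
    using tau01
  proof eventually_elim
    case (elim \<omega>)
    show ?case
    proof
      fix s assume s: "s \<in> {1..K}"
      have p: "0 < pS M S s" using ps s by auto
      have "0 \<le> \<tau> s (X \<omega>) / pS M S s" "\<tau> s (X \<omega>) / pS M S s \<le> 1 / pS M S s"
        using elim s p by (auto intro: divide_right_mono)
      thus "\<bar>tfun M S \<tau> s (X \<omega>)\<bar> \<le> 1 + 1 / pS M S s" unfolding tfun_def by auto
    qed
  qed
  have bbC: "AE \<omega> in M. \<forall>l\<in>I. \<bar>bb l (X \<omega>)\<bar> \<le> C"
    using tb
  proof eventually_elim
    case (elim \<omega>)
    show ?case
    proof
      fix l assume l: "l \<in> I"
      have "\<bar>bb l (X \<omega>)\<bar> \<le> (\<Sum>s\<in>{1..K}. \<bar>(\<Lambda>s l s - Vs l s) * tfun M S \<tau> s (X \<omega>)\<bar>)"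
        unfolding bb_def by (rule sum_abs)
      also have "\<dots> \<le> (\<Sum>s\<in>{1..K}. \<bar>\<Lambda>s l s - Vs l s\<bar> * (1 + 1 / pS M S s))"
        using elim by (intro sum_mono) (auto simp: abs_mult intro!: mult_left_mono)
      also have "\<dots> \<le> C" unfolding C_def using l fI ps
        by (intro member_le_sum[where f="\<lambda>l. \<Sum>s\<in>{1..K}. \<bar>\<Lambda>s l s - Vs l s\<bar> * (1 + 1 / pS M S s)"])
           (auto intro!: sum_nonneg mult_nonneg_nonneg pinv)
      finally show "\<bar>bb l (X \<omega>)\<bar> \<le> C" .
    qed
  qed
  have lnn: "0 \<le> ln (real (card I)) / \<beta>" using cardI beta by simp
  have LSE_int: "integrable M (\<lambda>\<omega>. LSE \<beta> I (\<lambda>l. a * bb l (X \<omega>) - rr l (X \<omega>)))"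
    if a: "0 \<le> a" "a \<le> 1" for a
  proof (rule Bochner_Integration.integrable_bound[of _ "\<lambda>\<omega>. C + ln (real (card I)) / \<beta> + (\<eta> (X \<omega>))\<^sup>2"])
    show "integrable M (\<lambda>\<omega>. C + ln (real (card I)) / \<beta> + (\<eta> (X \<omega>))\<^sup>2)"
      using eta2 by (intro Bochner_Integration.integrable_add) auto
    show "(\<lambda>\<omega>. LSE \<beta> I (\<lambda>l. a * bb l (X \<omega>) - rr l (X \<omega>))) \<in> borel_measurable M"
      unfolding LSE_def by measurable
    show "AE \<omega> in M. norm (LSE \<beta> I (\<lambda>l. a * bb l (X \<omega>) - rr l (X \<omega>)))
            \<le> norm (C + ln (real (card I)) / \<beta> + (\<eta> (X \<omega>))\<^sup>2)"
      using bbC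
    proof eventually_elim
      case (elim \<omega>)
      have ab: "\<bar>a * bb l (X \<omega>)\<bar> \<le> C" if "l \<in> I" for l
        using abs_scale_le[OF a elim[rule_format, OF that]] .
      have lo: "a * bb 0 (X \<omega>) - rr 0 (X \<omega>) \<le> LSE \<beta> I (\<lambda>l. a * bb l (X \<omega>) - rr l (X \<omega>))"
        by (rule LSE_ge_member[OF fI zI beta, of "\<lambda>l. a * bb l (X \<omega>) - rr l (X \<omega>)"])
      have up: "LSE \<beta> I (\<lambda>l. a * bb l (X \<omega>) - rr l (X \<omega>)) \<le> C + ln (real (card I)) / \<beta>"
        using ab rr_nn by (intro LSE_le_const[OF fI neI beta]) (smt (verit))
      have e2: "0 \<le> (\<eta> (X \<omega>))\<^sup>2" by simp
      have ab0: "- C \<le> a * bb 0 (X \<omega>)" using ab[OF zI] by linarith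
      have "\<bar>LSE \<beta> I (\<lambda>l. a * bb l (X \<omega>) - rr l (X \<omega>))\<bar> \<le> C + ln (real (card I)) / \<beta> + (\<eta> (X \<omega>))\<^sup>2"
        unfolding abs_le_iff using lo up ab0 rr0[of "X \<omega>"] lnn C0 e2 by linarith
      moreover have "0 \<le> C + ln (real (card I)) / \<beta> + (\<eta> (X \<omega>))\<^sup>2" using lnn C0 e2 by linarith
      ultimately show ?case by simp
    qed
  qed
  have risk_int: "integrable M (\<lambda>\<omega>. \<Sum>l\<in>I. p (X \<omega>) l * (grid B L l - \<eta> (X \<omega>))\<^sup>2)"
    if pm: "\<And>l. (\<lambda>x. p x l) \<in> borel_measurable borel" and pnn: "\<And>x l. 0 \<le> p x l"
      and psum: "\<And>x. (\<Sum>l\<in>I. p x l) = 1" for p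
  proof (rule Bochner_Integration.integrable_bound[of _ "\<lambda>\<omega>. (\<Sum>l\<in>I. 2 * (grid B L l)\<^sup>2) + 2 * (\<eta> (X \<omega>))\<^sup>2"])
    show "integrable M (\<lambda>\<omega>. (\<Sum>l\<in>I. 2 * (grid B L l)\<^sup>2) + 2 * (\<eta> (X \<omega>))\<^sup>2)"
      using eta2 by (intro Bochner_Integration.integrable_add) auto
    show "(\<lambda>\<omega>. \<Sum>l\<in>I. p (X \<omega>) l * (grid B L l - \<eta> (X \<omega>))\<^sup>2) \<in> borel_measurable M"
      using pm by measurable
    show "AE \<omega> in M. norm (\<Sum>l\<in>I. p (X \<omega>) l * (grid B L l - \<eta> (X \<omega>))\<^sup>2)
            \<le> norm ((\<Sum>l\<in>I. 2 * (grid B L l)\<^sup>2) + 2 * (\<eta> (X \<omega>))\<^sup>2)"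
    proof (rule AE_I2)
      fix \<omega>
      define x where "x = X \<omega>"
      have G0: "2 * (grid B L l)\<^sup>2 \<le> (\<Sum>l\<in>I. 2 * (grid B L l)\<^sup>2)" if "l \<in> I" for l
        using that fI by (intro member_le_sum) auto
      have p1: "p x l \<le> 1" if "l \<in> I" for l
        using psum[of x] that fI pnn by (metis member_le_sum)
      have "(\<Sum>l\<in>I. p x l * (grid B L l - \<eta> x)\<^sup>2) \<le> (\<Sum>l\<in>I. p x l * ((\<Sum>l\<in>I. 2 * (grid B L l)\<^sup>2) + 2 * (\<eta> x)\<^sup>2))"
      proof (intro sum_mono mult_left_mono pnn)
        fix l assume l: "l \<in> I"
        have "(grid B L l - \<eta> x)\<^sup>2 = rr l x" unfolding rr_def rfun_def by (simp add: power2_commute)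
        thus "(grid B L l - \<eta> x)\<^sup>2 \<le> (\<Sum>l\<in>I. 2 * (grid B L l)\<^sup>2) + 2 * (\<eta> x)\<^sup>2"
          using rr_le[of l x] G0[OF l] by linarith
      qed
      also have "\<dots> = (\<Sum>l\<in>I. 2 * (grid B L l)\<^sup>2) + 2 * (\<eta> x)\<^sup>2"
        by (simp add: sum_distrib_right[symmetric] psum)
      finally have "(\<Sum>l\<in>I. p x l * (grid B L l - \<eta> x)\<^sup>2) \<le> (\<Sum>l\<in>I. 2 * (grid B L l)\<^sup>2) + 2 * (\<eta> x)\<^sup>2" .
      moreover have "0 \<le> (\<Sum>l\<in>I. p x l * (grid B L l - \<eta> x)\<^sup>2)" using pnn by (intro sum_nonneg) auto
      ultimately show "norm (\<Sum>l\<in>I. p (X \<omega>) l * (grid B L l - \<eta> (X \<omega>))\<^sup>2)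
            \<le> norm ((\<Sum>l\<in>I. 2 * (grid B L l)\<^sup>2) + 2 * (\<eta> (X \<omega>))\<^sup>2)" unfolding x_def by simp
    qed
  qed
  define \<sigma> where "\<sigma> = pi_dual M S K B L \<beta> \<eta> \<tau> \<Lambda>s Vs"
  have score_eq: "score M S K B L \<eta> \<tau> \<Lambda>s Vs l x = bb l x - rr l x" for l x
    by (simp add: score_def bb_def rr_def)
  have sig_eq: "\<sigma> x l = softmax I (\<lambda>l'. \<beta> * (bb l' x - rr l' x)) l" for x l
    unfolding \<sigma>_def pi_dual_def score_eq I_def ..
  have sig_m[measurable]: "(\<lambda>x. \<sigma> x l) \<in> borel_measurable borel" for l
    unfolding sig_eq softmax_def by measurable
  have sig_nn: "0 \<le> \<sigma> x l" for x l unfolding sig_eq using fI by (rule softmax_nonneg)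
  have sig_sum: "(\<Sum>l\<in>I. \<sigma> x l) = 1" for x unfolding sig_eq using fI neI by (rule softmax_sum)
  have pi_sum': "(\<Sum>l\<in>I. \<pi> x l) = 1" for x using pi_sum unfolding I_def .
  have riskpi: "risk M X B L \<eta> \<pi> = (\<integral>\<omega>. (\<Sum>l\<in>I. \<pi> (X \<omega>) l * (grid B L l - \<eta> (X \<omega>))\<^sup>2) \<partial>M)"
    unfolding risk_def I_def ..
  have risksig: "risk M X B L \<eta> \<sigma> = (\<integral>\<omega>. (\<Sum>l\<in>I. \<sigma> (X \<omega>) l * (grid B L l - \<eta> (X \<omega>))\<^sup>2) \<partial>M)"
    unfolding risk_def I_def ..
  have rpi_int: "integrable M (\<lambda>\<omega>. \<Sum>l\<in>I. \<pi> (X \<omega>) l * (grid B L l - \<eta> (X \<omega>))\<^sup>2)"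
    by (rule risk_int[OF pi_m pi_nn pi_sum'])
  have rsig_int: "integrable M (\<lambda>\<omega>. \<Sum>l\<in>I. \<sigma> (X \<omega>) l * (grid B L l - \<eta> (X \<omega>))\<^sup>2)"
    by (rule risk_int[OF sig_m sig_nn sig_sum])
  have bint: "integrable M f" if "f \<in> borel_measurable M" "AE \<omega> in M. \<bar>f \<omega>\<bar> \<le> c" for f :: "'a \<Rightarrow> real" and c
    by (rule Bochner_Integration.integrable_bound[of _ "\<lambda>_. c"]) (use that in \<open>auto elim!: eventually_mono\<close>)
  have pi1: "\<pi> x l \<le> 1" if "l \<in> I" for x l
    using pi_sum'[of x] that fI pi_nn by (metis member_le_sum)
  have sig1: "\<sigma> x l \<le> 1" if "l \<in> I" for x l
    using sig_sum[of x] that fI sig_nn by (metis member_le_sum)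
  define A where "A s = {\<omega>\<in>space M. S \<omega> = s}" for s
  have Ept: "\<bar>\<integral>\<omega>. \<pi> (X \<omega>) l * tfun M S \<tau> s (X \<omega>) \<partial>M\<bar> \<le> \<epsilon> s"
    and int_pt: "integrable M (\<lambda>\<omega>. \<pi> (X \<omega>) l * tfun M S \<tau> s (X \<omega>))"
    if l: "l \<in> I" and s: "s \<in> {1..K}" for l s
  proof -
    have p: "0 < pS M S s" using ps s by auto
    have i1: "integrable M (\<lambda>\<omega>. \<pi> (X \<omega>) l)"
      by (rule bint[of _ 1]) (use pi_nn pi1[OF l] in auto)
    have i2: "integrable M (\<lambda>\<omega>. \<pi> (X \<omega>) l * \<tau> s (X \<omega>))"
      by (rule bint[of _ 1]) (use tau01 s pi_nn pi1[OF l] in \<open>auto elim!: eventually_mono simp: abs_mult intro!: mult_le_one\<close>)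
    have i3: "integrable M (\<lambda>\<omega>. \<pi> (X \<omega>) l * indicator (A s) \<omega>)"
      by (rule bint[of _ 1]) (use pi_nn pi1[OF l] Ssets in \<open>auto simp: A_def indicator_def\<close>)
    have eqpt: "\<pi> (X \<omega>) l * tfun M S \<tau> s (X \<omega>) = \<pi> (X \<omega>) l - \<pi> (X \<omega>) l * \<tau> s (X \<omega>) / pS M S s" for \<omega>
      unfolding tfun_def by (simp add: algebra_simps)
    show int_pt': "integrable M (\<lambda>\<omega>. \<pi> (X \<omega>) l * tfun M S \<tau> s (X \<omega>))"
      unfolding eqpt using i1 i2 by auto
    have "(\<integral>\<omega>. \<pi> (X \<omega>) l * \<tau> s (X \<omega>) \<partial>M) = (\<integral>\<omega>. \<pi> (X \<omega>) l * real_cond_exp M G (indicator (A s)) \<omega> \<partial>M)"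
      using tau[rule_format, OF s] unfolding G_def[symmetric] A_def[symmetric]
      by (intro integral_cong_AE) (auto elim!: eventually_mono)
    also have "\<dots> = (\<integral>\<omega>. \<pi> (X \<omega>) l * indicator (A s) \<omega> \<partial>M)"
    proof (rule F.real_cond_exp_intg(2))
      show "integrable M (\<lambda>\<omega>. \<pi> (X \<omega>) l * indicator (A s) \<omega>)" by (rule i3)
      show "(\<lambda>\<omega>. \<pi> (X \<omega>) l) \<in> borel_measurable G" using XG pi_m by measurable
      show "indicator (A s) \<in> borel_measurable M" using Ssets unfolding A_def by measurable
    qed
    finally have e: "(\<integral>\<omega>. \<pi> (X \<omega>) l * \<tau> s (X \<omega>) \<partial>M) = (\<integral>\<omega>. \<pi> (X \<omega>) l * indicator (A s) \<omega> \<partial>M)" .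
    have "(\<integral>\<omega>. \<pi> (X \<omega>) l * tfun M S \<tau> s (X \<omega>) \<partial>M)
        = (\<integral>\<omega>. \<pi> (X \<omega>) l \<partial>M) - (\<integral>\<omega>. \<pi> (X \<omega>) l * \<tau> s (X \<omega>) \<partial>M) / pS M S s"
      unfolding eqpt using i1 i2 by simp
    also have "\<dots> = - ((\<integral>\<omega>. \<pi> (X \<omega>) l * indicator (A s) \<omega> \<partial>M) / pS M S s - (\<integral>\<omega>. \<pi> (X \<omega>) l \<partial>M))"
      unfolding e by simp
    finally have eq: "(\<integral>\<omega>. \<pi> (X \<omega>) l * tfun M S \<tau> s (X \<omega>) \<partial>M) = - ((\<integral>\<omega>. \<pi> (X \<omega>) l * indicator (A s) \<omega> \<partial>M) / pS M S s - (\<integral>\<omega>. \<pi> (X \<omega>) l \<partial>M))" .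
    have u: "\<bar>(\<integral>\<omega>. \<pi> (X \<omega>) l * indicator (A s) \<omega> \<partial>M) / pS M S s - (\<integral>\<omega>. \<pi> (X \<omega>) l \<partial>M)\<bar> \<le> \<epsilon> s"
      using pi_fair l s unfolding unfair_def A_def I_def by auto
    show "\<bar>\<integral>\<omega>. \<pi> (X \<omega>) l * tfun M S \<tau> s (X \<omega>) \<partial>M\<bar> \<le> \<epsilon> s"
      unfolding eq abs_minus_cancel by (rule u)
  qed
  define c where "c = (\<Sum>l\<in>I. \<Sum>s\<in>{1..K}. (\<Lambda>s l s + Vs l s) * \<epsilon> s)"
  have Fstar: "Fobj M X S K B L \<beta> \<epsilon> \<eta> \<tau> \<Lambda>s Vs = (\<integral>\<omega>. LSE \<beta> I (\<lambda>l. bb l (X \<omega>) - rr l (X \<omega>)) \<partial>M) + c"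
    unfolding Fobj_def score_eq c_def I_def ..
  have LSE1: "integrable M (\<lambda>\<omega>. LSE \<beta> I (\<lambda>l. bb l (X \<omega>) - rr l (X \<omega>)))"
    using LSE_int[of 1] by simp
  have rr_eq: "rr l x = (grid B L l - \<eta> x)\<^sup>2" for l x unfolding rr_def rfun_def by (simp add: power2_commute)
  have weak: "- risk M X B L \<eta> \<pi> \<le> Fobj M X S K B L \<beta> \<epsilon> \<eta> \<tau> \<Lambda>s Vs"
  proof -
    have pt: "(\<Sum>l\<in>I. \<pi> (X \<omega>) l * (bb l (X \<omega>) - rr l (X \<omega>)))
      = (\<Sum>l\<in>I. \<Sum>s\<in>{1..K}. (\<Lambda>s l s - Vs l s) * (\<pi> (X \<omega>) l * tfun M S \<tau> s (X \<omega>)))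
        - (\<Sum>l\<in>I. \<pi> (X \<omega>) l * (grid B L l - \<eta> (X \<omega>))\<^sup>2)" for \<omega>
      unfolding bb_def rr_eq
      by (simp add: right_diff_distrib sum_subtractf sum_distrib_left mult_ac)
    have idbl: "integrable M (\<lambda>\<omega>. \<Sum>l\<in>I. \<Sum>s\<in>{1..K}. (\<Lambda>s l s - Vs l s) * (\<pi> (X \<omega>) l * tfun M S \<tau> s (X \<omega>)))"
      using int_pt by (intro Bochner_Integration.integrable_sum Bochner_Integration.integrable_mult_right) auto
    have "(\<integral>\<omega>. (\<Sum>l\<in>I. \<Sum>s\<in>{1..K}. (\<Lambda>s l s - Vs l s) * (\<pi> (X \<omega>) l * tfun M S \<tau> s (X \<omega>))) \<partial>M)
        = (\<Sum>l\<in>I. \<Sum>s\<in>{1..K}. (\<Lambda>s l s - Vs l s) * (\<integral>\<omega>. \<pi> (X \<omega>) l * tfun M S \<tau> s (X \<omega>) \<partial>M))"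
    proof -
      have "(\<integral>\<omega>. (\<Sum>l\<in>I. \<Sum>s\<in>{1..K}. (\<Lambda>s l s - Vs l s) * (\<pi> (X \<omega>) l * tfun M S \<tau> s (X \<omega>))) \<partial>M)
        = (\<Sum>l\<in>I. (\<integral>\<omega>. (\<Sum>s\<in>{1..K}. (\<Lambda>s l s - Vs l s) * (\<pi> (X \<omega>) l * tfun M S \<tau> s (X \<omega>))) \<partial>M))"
        by (rule Bochner_Integration.integral_sum)
           (use int_pt in \<open>auto intro!: Bochner_Integration.integrable_sum Bochner_Integration.integrable_mult_right\<close>)
      also have "\<dots> = (\<Sum>l\<in>I. \<Sum>s\<in>{1..K}. (\<integral>\<omega>. (\<Lambda>s l s - Vs l s) * (\<pi> (X \<omega>) l * tfun M S \<tau> s (X \<omega>)) \<partial>M))"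
        by (intro sum.cong refl Bochner_Integration.integral_sum)
           (use int_pt in \<open>auto intro!: Bochner_Integration.integrable_mult_right\<close>)
      also have "\<dots> = (\<Sum>l\<in>I. \<Sum>s\<in>{1..K}. (\<Lambda>s l s - Vs l s) * (\<integral>\<omega>. \<pi> (X \<omega>) l * tfun M S \<tau> s (X \<omega>) \<partial>M))"
        by simp
      finally show ?thesis .
    qed
    also have "\<dots> \<ge> (\<Sum>l\<in>I. \<Sum>s\<in>{1..K}. - ((\<Lambda>s l s + Vs l s) * \<epsilon> s))"
    proof (intro sum_mono)
      fix l s assume l: "l \<in> I" and s: "s \<in> {1..K}"
      define e where "e = (\<integral>\<omega>. \<pi> (X \<omega>) l * tfun M S \<tau> s (X \<omega>) \<partial>M)"
      have e: "- \<epsilon> s \<le> e" "e \<le> \<epsilon> s" using Ept[OF l s] unfolding e_def by auto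
      have nn: "0 \<le> \<Lambda>s l s" "0 \<le> Vs l s" using nonneg_star l s unfolding I_def by auto
      have "\<Lambda>s l s * (- \<epsilon> s) \<le> \<Lambda>s l s * e" using nn e by (intro mult_left_mono) auto
      moreover have "Vs l s * e \<le> Vs l s * \<epsilon> s" using nn e by (intro mult_left_mono) auto
      ultimately show "- ((\<Lambda>s l s + Vs l s) * \<epsilon> s) \<le> (\<Lambda>s l s - Vs l s) * e"
        by (simp add: algebra_simps)
    qed
    also have "(\<Sum>l\<in>I. \<Sum>s\<in>{1..K}. - ((\<Lambda>s l s + Vs l s) * \<epsilon> s)) = - c"
      unfolding c_def by (simp add: sum_negf)
    finally have dbl: "- c \<le> (\<integral>\<omega>. (\<Sum>l\<in>I. \<Sum>s\<in>{1..K}. (\<Lambda>s l s - Vs l s) * (\<pi> (X \<omega>) l * tfun M S \<tau> s (X \<omega>))) \<partial>M)" .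
    have "- c - risk M X B L \<eta> \<pi> \<le> (\<integral>\<omega>. (\<Sum>l\<in>I. \<pi> (X \<omega>) l * (bb l (X \<omega>) - rr l (X \<omega>))) \<partial>M)"
      unfolding pt riskpi using idbl rpi_int dbl by simp
    also have "\<dots> \<le> (\<integral>\<omega>. LSE \<beta> I (\<lambda>l. bb l (X \<omega>) - rr l (X \<omega>)) \<partial>M)"
    proof (rule integral_mono)
      show "integrable M (\<lambda>\<omega>. \<Sum>l\<in>I. \<pi> (X \<omega>) l * (bb l (X \<omega>) - rr l (X \<omega>)))"
        unfolding pt using idbl rpi_int by auto
      show "integrable M (\<lambda>\<omega>. LSE \<beta> I (\<lambda>l. bb l (X \<omega>) - rr l (X \<omega>)))" by (rule LSE1)
      fix \<omega> show "(\<Sum>l\<in>I. \<pi> (X \<omega>) l * (bb l (X \<omega>) - rr l (X \<omega>))) \<le> LSE \<beta> I (\<lambda>l. bb l (X \<omega>) - rr l (X \<omega>))"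
        by (rule LSE_ge_avg[OF fI neI beta]) (use pi_nn pi_sum' in auto)
    qed
    finally show ?thesis unfolding Fstar by linarith
  qed
  define Sb where "Sb \<omega> = (\<Sum>l\<in>I. \<sigma> (X \<omega>) l * bb l (X \<omega>))" for \<omega>
  have Sb_int: "integrable M Sb"
  proof (rule bint[of _ C])
    show "Sb \<in> borel_measurable M" unfolding Sb_def by measurable
    show "AE \<omega> in M. \<bar>Sb \<omega>\<bar> \<le> C" using bbC
    proof eventually_elim
      case (elim \<omega>)
      have "\<bar>Sb \<omega>\<bar> \<le> (\<Sum>l\<in>I. \<bar>\<sigma> (X \<omega>) l * bb l (X \<omega>)\<bar>)" unfolding Sb_def by (rule sum_abs)
      also have "\<dots> \<le> (\<Sum>l\<in>I. \<sigma> (X \<omega>) l * C)"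
        using elim sig_nn by (intro sum_mono) (auto simp: abs_mult intro!: mult_left_mono)
      also have "\<dots> = C" by (simp add: sum_distrib_right[symmetric] sig_sum)
      finally show ?case .
    qed
  qed
  define D where "D = (\<integral>\<omega>. Sb \<omega> \<partial>M) + c"
  have upper: "Fobj M X S K B L \<beta> \<epsilon> \<eta> \<tau> \<Lambda>s Vs \<le> D - risk M X B L \<eta> \<sigma> + ln (real (card I)) / \<beta>"
  proof -
    have pt: "(\<Sum>l\<in>I. \<sigma> (X \<omega>) l * (bb l (X \<omega>) - rr l (X \<omega>)))
       = Sb \<omega> - (\<Sum>l\<in>I. \<sigma> (X \<omega>) l * (grid B L l - \<eta> (X \<omega>))\<^sup>2)" for \<omega>
      unfolding Sb_def rr_eq by (simp add: right_diff_distrib sum_subtractf)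
    have "(\<integral>\<omega>. LSE \<beta> I (\<lambda>l. bb l (X \<omega>) - rr l (X \<omega>)) \<partial>M)
        \<le> (\<integral>\<omega>. Sb \<omega> - (\<Sum>l\<in>I. \<sigma> (X \<omega>) l * (grid B L l - \<eta> (X \<omega>))\<^sup>2) + ln (real (card I)) / \<beta> \<partial>M)"
    proof (rule integral_mono)
      show "integrable M (\<lambda>\<omega>. LSE \<beta> I (\<lambda>l. bb l (X \<omega>) - rr l (X \<omega>)))" by (rule LSE1)
      show "integrable M (\<lambda>\<omega>. Sb \<omega> - (\<Sum>l\<in>I. \<sigma> (X \<omega>) l * (grid B L l - \<eta> (X \<omega>))\<^sup>2) + ln (real (card I)) / \<beta>)"
        using Sb_int rsig_int by auto
      fix \<omega>
      have "LSE \<beta> I (\<lambda>l. bb l (X \<omega>) - rr l (X \<omega>))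
          \<le> (\<Sum>j\<in>I. softmax I (\<lambda>l. \<beta> * (bb l (X \<omega>) - rr l (X \<omega>))) j * (bb j (X \<omega>) - rr j (X \<omega>))) + ln (real (card I)) / \<beta>"
        by (rule LSE_le_avg[OF fI neI beta])
      also have "\<dots> = Sb \<omega> - (\<Sum>l\<in>I. \<sigma> (X \<omega>) l * (grid B L l - \<eta> (X \<omega>))\<^sup>2) + ln (real (card I)) / \<beta>"
        unfolding sig_eq[symmetric] pt ..
      finally show "LSE \<beta> I (\<lambda>l. bb l (X \<omega>) - rr l (X \<omega>))
          \<le> Sb \<omega> - (\<Sum>l\<in>I. \<sigma> (X \<omega>) l * (grid B L l - \<eta> (X \<omega>))\<^sup>2) + ln (real (card I)) / \<beta>" .
    qed
    also have "\<dots> = (\<integral>\<omega>. Sb \<omega> \<partial>M) - risk M X B L \<eta> \<sigma> + ln (real (card I)) / \<beta>"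
      unfolding risksig using Sb_int rsig_int by (simp add: prob_space)
    finally show ?thesis unfolding Fstar D_def by linarith
  qed
  have Dle: "D \<le> \<beta> * C\<^sup>2 * \<delta>" if d: "0 < \<delta>" "\<delta> \<le> 1 / (\<beta> * C + 1)" for \<delta>
  proof -
    have bC: "0 \<le> \<beta> * C" using beta C0 by simp
    have "\<delta> * (\<beta> * C + 1) \<le> 1" using d bC by (simp add: field_simps)
    moreover have "\<delta> * (\<beta> * C + 1) = \<delta> + \<beta> * \<delta> * C" by (simp add: algebra_simps)
    moreover have "0 \<le> \<beta> * \<delta> * C" using beta d C0 by simp
    ultimately have d1: "\<delta> \<le> 1" and dC: "\<beta> * \<delta> * C \<le> 1" using d by linarith+
    define \<Lambda>' where "\<Lambda>' l s = (1 - \<delta>) * \<Lambda>s l s" for l s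
    define V' where "V' l s = (1 - \<delta>) * Vs l s" for l s
    have feas: "\<forall>l\<in>{-int L..int L}. \<forall>s\<in>{1..K}. 0 \<le> \<Lambda>' l s \<and> 0 \<le> V' l s"
      using nonneg_star d1 by (auto simp: \<Lambda>'_def V'_def)
    have sc: "score M S K B L \<eta> \<tau> \<Lambda>' V' l x = (1 - \<delta>) * bb l x - rr l x" for l x
    proof -
      have "(\<Sum>s\<in>{1..K}. (\<Lambda>' l s - V' l s) * tfun M S \<tau> s x)
          = (\<Sum>s\<in>{1..K}. (1 - \<delta>) * ((\<Lambda>s l s - Vs l s) * tfun M S \<tau> s x))"
        by (intro sum.cong refl) (simp add: \<Lambda>'_def V'_def algebra_simps)
      thus ?thesis unfolding score_def bb_def rr_def by (simp add: sum_distrib_left)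
    qed
    have cc: "(\<Sum>l\<in>I. \<Sum>s\<in>{1..K}. (\<Lambda>' l s + V' l s) * \<epsilon> s) = (1 - \<delta>) * c"
    proof -
      have "(\<Sum>l\<in>I. \<Sum>s\<in>{1..K}. (\<Lambda>' l s + V' l s) * \<epsilon> s) = (\<Sum>l\<in>I. \<Sum>s\<in>{1..K}. (1 - \<delta>) * ((\<Lambda>s l s + Vs l s) * \<epsilon> s))"
        by (intro sum.cong refl) (simp add: \<Lambda>'_def V'_def algebra_simps)
      thus ?thesis unfolding c_def by (simp add: sum_distrib_left)
    qed
    have Fd: "Fobj M X S K B L \<beta> \<epsilon> \<eta> \<tau> \<Lambda>' V' = (\<integral>\<omega>. LSE \<beta> I (\<lambda>l. (1 - \<delta>) * bb l (X \<omega>) - rr l (X \<omega>)) \<partial>M) + (1 - \<delta>) * c"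
      unfolding Fobj_def sc cc[unfolded I_def] I_def ..
    have "Fobj M X S K B L \<beta> \<epsilon> \<eta> \<tau> \<Lambda>s Vs \<le> Fobj M X S K B L \<beta> \<epsilon> \<eta> \<tau> \<Lambda>' V'"
      using minimizer feas by blast
    also have "(\<integral>\<omega>. LSE \<beta> I (\<lambda>l. (1 - \<delta>) * bb l (X \<omega>) - rr l (X \<omega>)) \<partial>M)
        \<le> (\<integral>\<omega>. LSE \<beta> I (\<lambda>l. bb l (X \<omega>) - rr l (X \<omega>)) - \<delta> * Sb \<omega> + \<beta> * \<delta>\<^sup>2 * C\<^sup>2 \<partial>M)"
    proof (rule integral_mono_AE)
      show "integrable M (\<lambda>\<omega>. LSE \<beta> I (\<lambda>l. (1 - \<delta>) * bb l (X \<omega>) - rr l (X \<omega>)))"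
        using LSE_int[of "1 - \<delta>"] d d1 by simp
      show "integrable M (\<lambda>\<omega>. LSE \<beta> I (\<lambda>l. bb l (X \<omega>) - rr l (X \<omega>)) - \<delta> * Sb \<omega> + \<beta> * \<delta>\<^sup>2 * C\<^sup>2)"
        using LSE1 Sb_int by auto
      show "AE \<omega> in M. LSE \<beta> I (\<lambda>l. (1 - \<delta>) * bb l (X \<omega>) - rr l (X \<omega>))
          \<le> LSE \<beta> I (\<lambda>l. bb l (X \<omega>) - rr l (X \<omega>)) - \<delta> * Sb \<omega> + \<beta> * \<delta>\<^sup>2 * C\<^sup>2"
        using bbC
      proof eventually_elim
        case (elim \<omega>)
        have e: "(\<lambda>l. (1 - \<delta>) * bb l (X \<omega>) - rr l (X \<omega>)) = (\<lambda>l. (bb l (X \<omega>) - rr l (X \<omega>)) - \<delta> * bb l (X \<omega>))"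
          by (auto simp: algebra_simps)
        show ?case unfolding e Sb_def sig_eq
          by (rule LSE_shift[OF fI neI beta _ _ dC]) (use d elim in auto)
      qed
    qed
    hence "Fobj M X S K B L \<beta> \<epsilon> \<eta> \<tau> \<Lambda>' V' \<le> (\<integral>\<omega>. LSE \<beta> I (\<lambda>l. bb l (X \<omega>) - rr l (X \<omega>)) - \<delta> * Sb \<omega> + \<beta> * \<delta>\<^sup>2 * C\<^sup>2 \<partial>M) + (1 - \<delta>) * c"
      unfolding Fd by simp
    also have "\<dots> = Fobj M X S K B L \<beta> \<epsilon> \<eta> \<tau> \<Lambda>s Vs - \<delta> * D + \<beta> * \<delta>\<^sup>2 * C\<^sup>2"
      unfolding Fstar D_def using LSE1 Sb_int by (simp add: prob_space algebra_simps)
    finally have "\<delta> * D \<le> \<delta> * (\<beta> * C\<^sup>2 * \<delta>)" by (simp add: power2_eq_square algebra_simps)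
    thus ?thesis using d by simp
  qed
  have "0 \<le> \<beta> * C" using beta C0 by simp
  hence bC1: "0 < \<beta> * C + 1" by linarith
  have D0: "D \<le> 0"
    by (rule small_le[of "1 / (\<beta> * C + 1)" "\<beta> * C\<^sup>2"]) (use beta C0 Dle bC1 in auto)
  have "- risk M X B L \<eta> \<pi> \<le> D - risk M X B L \<eta> \<sigma> + ln (real (card I)) / \<beta>"
    using weak upper by linarith
  thus ?thesis using D0 unfolding \<sigma>_def cardI by linarith
qed

end
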